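(* Let $(X,d)$ be a complete generalized metric space and let $T,S:X\to X$ be mappings such that $T$ is continuous, one-to-one and subsequentially convergent. Suppose there is $\lambda\in[0,\tfrac12)$ such that \[ d(TSx,TSy)\le \lambda\big[d(Tx,TSx)+d(Ty,TSy)\big] \] for all $x,y\in X$. Then $S$ has a unique fixed point. Moreover, if $T$ is sequentially convergent, then for every $x_0\in X$ the sequence of iterates $\{S^n x_0\}$ converges to this fixed point.
   Context: A generalized metric space (in the sense of Branciari) is a nonempty set $X$ with a map $d:X\times X\to\mathbb{R}$ such that: (i) $d(x,y)\ge 0$ for all $x,y\in X$, and $d(x,y)=0$ iff $x=y$; (ii) $d(x,y)=d(y,x)$ for all $x,y\in X$; (iii) (rectangular property) $d(x,y)\le d(x,w)+d(w,z)+d(z,y)$ for all $x,y\in X$ and all distinct points $w,z\in X\setminus\{x,y\}$. A sequence $\{x_n\}$ in $X$ converges to $x\in X$ if $d(x_n,x)\to 0$; it is Cauchy if $d(x_n,x_m)\to 0$ as $n,m\to\infty$; $(X,d)$ is complete if every Cauchy sequence converges. $T:X\to X$ is continuous if $x_n\to x$ implies $Tx_n\to Tx$. A mapping $T:X\to X$ is called sequentially convergent if for every sequence $\{y_n\}$ in $X$, convergence of $\{Ty_n\}$ implies convergence of $\{y_n\}$; $T$ is called subsequentially convergent if for every sequence $\{y_n\}$ in $X$, convergence of $\{Ty_n\}$ implies that $\{y_n\}$ has a convergent subsequence. *)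

theory Defs
  imports "HOL-Analysis.Analysis"
begin

text \<open>Generalized metric space in the sense of Branciari, on a carrier set X.\<close>
definition gen_metric_space :: "'a set \<Rightarrow> ('a \<Rightarrow> 'a \<Rightarrow> real) \<Rightarrow> bool" where
  "gen_metric_space X d \<longleftrightarrow> X \<noteq> {} \<and>
     (\<forall>x\<in>X. \<forall>y\<in>X. d x y \<ge> 0 \<and> (d x y = 0 \<longleftrightarrow> x = y)) \<and>
     (\<forall>x\<in>X. \<forall>y\<in>X. d x y = d y x) \<and>
     (\<forall>x\<in>X. \<forall>y\<in>X. \<forall>w\<in>X. \<forall>z\<in>X.
        w \<noteq> z \<and> w \<notin> {x, y} \<and> z \<notin> {x, y} \<longrightarrow> d x y \<le> d x w + d w z + d z y)"

definition gm_converges :: "'a set \<Rightarrow> ('a \<Rightarrow> 'a \<Rightarrow> real) \<Rightarrow> (nat \<Rightarrow> 'a) \<Rightarrow> 'a \<Rightarrow> bool" where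
  "gm_converges X d s x \<longleftrightarrow> x \<in> X \<and> (\<lambda>n. d (s n) x) \<longlonglongrightarrow> 0"

definition gm_convergent :: "'a set \<Rightarrow> ('a \<Rightarrow> 'a \<Rightarrow> real) \<Rightarrow> (nat \<Rightarrow> 'a) \<Rightarrow> bool" where
  "gm_convergent X d s \<longleftrightarrow> (\<exists>x. gm_converges X d s x)"

definition gm_Cauchy :: "('a \<Rightarrow> 'a \<Rightarrow> real) \<Rightarrow> (nat \<Rightarrow> 'a) \<Rightarrow> bool" where
  "gm_Cauchy d s \<longleftrightarrow> (\<forall>e>0. \<exists>N. \<forall>m\<ge>N. \<forall>n\<ge>N. d (s m) (s n) < e)"

definition gm_complete :: "'a set \<Rightarrow> ('a \<Rightarrow> 'a \<Rightarrow> real) \<Rightarrow> bool" where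
  "gm_complete X d \<longleftrightarrow> (\<forall>s. range s \<subseteq> X \<and> gm_Cauchy d s \<longrightarrow> gm_convergent X d s)"

definition gm_continuous :: "'a set \<Rightarrow> ('a \<Rightarrow> 'a \<Rightarrow> real) \<Rightarrow> ('a \<Rightarrow> 'a) \<Rightarrow> bool" where
  "gm_continuous X d T \<longleftrightarrow> (\<forall>s x. range s \<subseteq> X \<and> gm_converges X d s x \<longrightarrow>
       gm_converges X d (\<lambda>n. T (s n)) (T x))"

definition seq_convergent_map :: "'a set \<Rightarrow> ('a \<Rightarrow> 'a \<Rightarrow> real) \<Rightarrow> ('a \<Rightarrow> 'a) \<Rightarrow> bool" where
  "seq_convergent_map X d T \<longleftrightarrow> (\<forall>y. range y \<subseteq> X \<and> gm_convergent X d (\<lambda>n. T (y n)) \<longrightarrow>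
       gm_convergent X d y)"

definition subseq_convergent_map :: "'a set \<Rightarrow> ('a \<Rightarrow> 'a \<Rightarrow> real) \<Rightarrow> ('a \<Rightarrow> 'a) \<Rightarrow> bool" where
  "subseq_convergent_map X d T \<longleftrightarrow> (\<forall>y. range y \<subseteq> X \<and> gm_convergent X d (\<lambda>n. T (y n)) \<longrightarrow>
       (\<exists>r. strict_mono r \<and> gm_convergent X d (y \<circ> r)))"

end

theory Submission
  imports Defs
begin

lemma core:
  fixes X :: "'a set" and d :: "'a \<Rightarrow> 'a \<Rightarrow> real" and T S :: "'a \<Rightarrow> 'a" and lam :: real
  assumes gms: "gen_metric_space X d"
    and compl: "gm_complete X d"
    and TX: "T ` X \<subseteq> X" and SX: "S ` X \<subseteq> X"
    and Tcont: "gm_continuous X d T"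
    and Tinj: "inj_on T X"
    and lam_rng: "0 \<le> lam" "lam < 1/2"
    and contr: "\<forall>x\<in>X. \<forall>y\<in>X. d (T (S x)) (T (S y)) \<le> lam * (d (T x) (T (S x)) + d (T y) (T (S y)))"
    and x0: "x0 \<in> X"
  shows "gm_convergent X d (\<lambda>n. T ((S^^n) x0)) \<and>
     ((\<exists>N. S ((S^^N) x0) = (S^^N) x0) \<or>
      (\<forall>v r. strict_mono r \<and> gm_converges X d (\<lambda>n. (S^^(r n)) x0) v \<longrightarrow> S v = v))"
proof -
  define x where "x n = (S^^n) x0" for n
  define t where "t n = T (x n)" for n
  define a where "a n = d (t n) (t (Suc n))" for n
  define h where "h = lam/(1-lam)"
  from gms have pos: "\<forall>x\<in>X. \<forall>y\<in>X. d x y \<ge> 0 \<and> (d x y = 0 \<longleftrightarrow> x = y)"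
    and sym: "\<forall>x\<in>X. \<forall>y\<in>X. d x y = d y x"
    and rect: "\<forall>x\<in>X. \<forall>y\<in>X. \<forall>w\<in>X. \<forall>z\<in>X.
        w \<noteq> z \<and> w \<notin> {x, y} \<and> z \<notin> {x, y} \<longrightarrow> d x y \<le> d x w + d w z + d z y"
    unfolding gen_metric_space_def by auto
  have xX: "x n \<in> X" for n
    by (induction n) (use x0 SX in \<open>auto simp: x_def\<close>)
  have xS: "x (Suc n) = S (x n)" for n by (simp add: x_def)
  have tX: "t n \<in> X" for n using TX xX by (auto simp: t_def)
  have a0: "a n \<ge> 0" for n using pos tX by (simp add: a_def)
  have l1: "1 - lam > 0" using lam_rng by simp
  have h0: "0 \<le> h" "h < 1" using lam_rng l1 by (auto simp: h_def field_simps)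
  have astep: "a (Suc n) \<le> h * a n" for n
  proof -
    have "d (T (S (x n))) (T (S (x (Suc n)))) \<le> lam * (d (T (x n)) (T (S (x n))) + d (T (x (Suc n))) (T (S (x (Suc n)))))"
      using contr xX by blast
    then have "a (Suc n) \<le> lam * (a n + a (Suc n))" by (simp add: a_def t_def xS)
    then have "(1-lam) * a(Suc n) \<le> lam * a n" by (simp add: algebra_simps)
    then show ?thesis using l1 by (simp add: h_def field_simps)
  qed
  have apow: "a (n+k) \<le> h^k * a n" for n k
  proof (induction k)
    case 0 then show ?case by simp
  next
    case (Suc k)
    have "a (n + Suc k) \<le> h * a (n+k)" using astep[of "n+k"] by simp
    also have "\<dots> \<le> h * (h^k * a n)" using Suc h0 by (simp add: mult_left_mono)
    finally show ?case by (simp add: mult.assoc)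
  qed
  have dT: "d (t (Suc m)) (t (Suc n)) \<le> lam * (a m + a n)" for m n
  proof -
    have "d (T (S (x m))) (T (S (x n))) \<le> lam * (d (T (x m)) (T (S (x m))) + d (T (x n)) (T (S (x n))))"
      using contr xX by blast
    then show ?thesis by (simp add: a_def t_def xS)
  qed
  have alim: "a \<longlonglongrightarrow> 0"
  proof (rule tendsto_sandwich[of "\<lambda>_. 0" _ _ "\<lambda>k. h^k * a 0"])
    show "\<forall>\<^sub>F n in sequentially. 0 \<le> a n" using a0 by simp
    show "\<forall>\<^sub>F n in sequentially. a n \<le> h^n * a 0" using apow[of 0] by simp
    show "(\<lambda>_. 0::real) \<longlonglongrightarrow> 0" by simp
    show "(\<lambda>k. h^k * a 0) \<longlonglongrightarrow> 0"
      using tendsto_mult_right_zero[OF LIMSEQ_power_zero[of h], of "a 0"] h0 by (simp add: mult.commute)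
  qed
  have Cauchy: "gm_Cauchy d t"
    unfolding gm_Cauchy_def
  proof (intro allI impI)
    fix e :: real assume e: "e > 0"
    have "(\<lambda>n. lam * a n) \<longlonglongrightarrow> 0" using tendsto_mult_left_zero[OF alim, of lam] by (simp add: mult.commute)
    from order_tendstoD(2)[OF this, of "e/2"] e
    obtain N where N: "\<forall>n\<ge>N. lam * a n < e/2" by (auto simp: eventually_sequentially)
    show "\<exists>N. \<forall>m\<ge>N. \<forall>n\<ge>N. d (t m) (t n) < e"
    proof (intro exI[of _ "Suc N"] allI impI)
      fix m n assume "Suc N \<le> m" "Suc N \<le> n"
      then obtain m' n' where mn: "m = Suc m'" "n = Suc n'" "N \<le> m'" "N \<le> n'"
        by (cases m; cases n) auto
      have "d (t m) (t n) \<le> lam * a m' + lam * a n'" using dT[of m' n'] mn by (simp add: ring_distribs)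
      moreover have "lam * a m' < e/2" "lam * a n' < e/2" using N mn by auto
      ultimately show "d (t m) (t n) < e" by linarith
    qed
  qed
  then have tconv: "gm_convergent X d t" using compl tX unfolding gm_complete_def by auto
  have part2: "(\<exists>N. S (x N) = x N) \<or>
      (\<forall>v r. strict_mono r \<and> gm_converges X d (\<lambda>n. x (r n)) v \<longrightarrow> S v = v)"
  proof (cases "\<exists>n. t n = t (Suc n)")
    case True
    then obtain N where "t N = t (Suc N)" by blast
    then have "T (x N) = T (S (x N))" by (simp add: t_def xS)
    then have "x N = S (x N)" using inj_onD[OF Tinj] xX SX by blast
    then show ?thesis by (intro disjI1) (metis)
  next
    case False
    then have nB: "t n \<noteq> t (Suc n)" for n by blast
    have apos: "a n > 0" for n
    proof -
      have "d (t n) (t (Suc n)) \<ge> 0" "d (t n) (t (Suc n)) \<noteq> 0"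
        using pos tX[of n] tX[of "Suc n"] nB[of n] by blast+
      then show ?thesis unfolding a_def by linarith
    qed
    have tinj: "t n \<noteq> t m" if "n < m" for n m
    proof
      assume eq: "t n = t m"
      from that obtain k where m: "m = Suc (n+k)" using less_imp_Suc_add by blast
      have "x n = x m" using inj_onD[OF Tinj] eq xX by (simp add: t_def)
      then have "t (Suc n) = t (Suc m)" by (simp add: t_def xS)
      then have am: "a m = a n" using eq by (simp add: a_def)
      have "a (n + Suc k) \<le> h^(Suc k) * a n" by (rule apow)
      also have "\<dots> < 1 * a n"
      proof (rule mult_strict_right_mono)
        have "h^k \<le> 1" using h0 by (simp add: power_le_one)
        then have "h * h^k \<le> h" using h0 by (simp add: mult_left_le)
        then show "h ^ Suc k < 1" using h0 by (simp add: mult.commute)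
      qed (use apos in auto)
      finally show False using am m by simp
    qed
    have avoid: "\<exists>N. \<forall>k\<ge>N. t k \<noteq> c" for c
    proof (cases "\<exists>k0. t k0 = c")
      case True
      then obtain k0 where k0: "t k0 = c" by blast
      have "\<forall>k\<ge>Suc k0. t k \<noteq> c"
      proof (intro allI impI)
        fix k assume "Suc k0 \<le> k"
        then have "k0 < k" by simp
        then show "t k \<noteq> c" using tinj[of k0 k] k0 by simp
      qed
      then show ?thesis by blast
    next
      case False then show ?thesis by blast
    qed
    show ?thesis
    proof (rule disjI2, intro allI impI, elim conjE)
      fix v r assume r: "strict_mono r" and conv: "gm_converges X d (\<lambda>n. x (r n)) v"
      have vX: "v \<in> X" using conv by (simp add: gm_converges_def)
      have "gm_converges X d (\<lambda>n. T (x (r n))) (T v)"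
      proof -
        have "range (\<lambda>n. x (r n)) \<subseteq> X" using xX by auto
        then show ?thesis using Tcont conv unfolding gm_continuous_def by (elim allE[of _ "\<lambda>n. x (r n)"] allE[of _ v]) simp
      qed
      then have tc: "(\<lambda>n. d (t (r n)) (T v)) \<longlonglongrightarrow> 0" by (simp add: gm_converges_def t_def)
      show "S v = v"
      proof (rule ccontr)
        assume ne: "S v \<noteq> v"
        have SvX: "S v \<in> X" using SX vX by auto
        have TvX: "T v \<in> X" "T (S v) \<in> X" using TX vX SvX by auto
        have "T (S v) \<noteq> T v" using ne inj_onD[OF Tinj] vX SvX by blast
        define \<delta> where "\<delta> = d (T v) (T (S v))"
        have dpos: "\<delta> > 0"
        proof -
          have pp: "0 \<le> d (T v) (T (S v)) \<and> (d (T v) (T (S v)) = 0) = (T v = T (S v))"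
            using pos TvX by blast
          have "T v \<noteq> T (S v)" using \<open>T (S v) \<noteq> T v\<close> by simp
          then show ?thesis unfolding \<delta>_def using pp by linarith
        qed
        obtain N1 where N1: "\<forall>k\<ge>N1. t k \<noteq> T v" using avoid by blast
        obtain N2 where N2: "\<forall>k\<ge>N2. t k \<noteq> T (S v)" using avoid by blast
        have ev: "\<forall>\<^sub>F n in sequentially. \<delta> - lam * \<delta> \<le> d (t (r n)) (T v) + a (r n) + lam * a (r n)"
          unfolding eventually_sequentially
        proof (intro exI[of _ "max N1 N2"] allI impI)
          fix n assume "max N1 N2 \<le> n"
          then have rn: "r n \<ge> N1" "r n \<ge> N2" using seq_suble[OF r, of n] by auto
          have e1: "\<delta> \<le> d (T v) (t (r n)) + d (t (r n)) (t (Suc (r n))) + d (t (Suc (r n))) (T (S v))"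
          proof -
            have "t (r n) \<noteq> T v" "t (Suc (r n)) \<noteq> T v" using N1 rn by auto
            moreover have "t (r n) \<noteq> T (S v)" "t (Suc (r n)) \<noteq> T (S v)" using N2 rn by auto
            ultimately have "t (r n) \<noteq> t (Suc (r n)) \<and> t (r n) \<notin> {T v, T (S v)} \<and> t (Suc (r n)) \<notin> {T v, T (S v)}"
              using nB[of "r n"] by auto
            then show ?thesis unfolding \<delta>_def using rect TvX tX[of "r n"] tX[of "Suc (r n)"] by blast
          qed
          have e2: "d (T v) (t (r n)) = d (t (r n)) (T v)" using sym TvX tX by blast
          have "d (T (S (x (r n)))) (T (S v)) \<le> lam * (d (T (x (r n))) (T (S (x (r n)))) + d (T v) (T (S v)))"
            using contr xX vX by blast
          then have "d (t (Suc (r n))) (T (S v)) \<le> lam * (a (r n) + \<delta>)"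
            by (simp add: a_def t_def xS \<delta>_def)
          then have e3: "d (t (Suc (r n))) (T (S v)) \<le> lam * a (r n) + lam * \<delta>"
            by (simp add: ring_distribs)
          have e4: "a (r n) = d (t (r n)) (t (Suc (r n)))" by (simp add: a_def)
          show "\<delta> - lam * \<delta> \<le> d (t (r n)) (T v) + a (r n) + lam * a (r n)"
            using e1 e2 e3 e4 by linarith
        qed
        have ar: "(\<lambda>n. a (r n)) \<longlonglongrightarrow> 0" using LIMSEQ_subseq_LIMSEQ[OF alim r] by (simp add: o_def)
        have "(\<lambda>n. d (t (r n)) (T v) + a (r n) + lam * a (r n)) \<longlonglongrightarrow> 0 + 0 + 0"
          using tendsto_mult_right_zero[OF ar, of lam] by (intro tendsto_add tc ar) (simp add: mult.commute)
        then have lim: "(\<lambda>n. d (t (r n)) (T v) + a (r n) + lam * a (r n)) \<longlonglongrightarrow> 0" by simp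
        have "\<delta> - lam * \<delta> \<le> 0" using tendsto_lowerbound[OF lim ev] by simp
        moreover have "lam * \<delta> < 1 * \<delta>" using lam_rng dpos by (intro mult_strict_right_mono) auto
        ultimately show False by simp
      qed
    qed
  qed
  have teq: "t = (\<lambda>n. T ((S^^n) x0))" by (simp add: fun_eq_iff t_def x_def)
  show ?thesis using tconv part2 unfolding teq by (simp add: x_def)
qed

theorem theorem2p4:
  fixes X :: "'a set" and d :: "'a \<Rightarrow> 'a \<Rightarrow> real" and T S :: "'a \<Rightarrow> 'a" and lam :: real
  assumes gms: "gen_metric_space X d"
    and compl: "gm_complete X d"
    and TX: "T ` X \<subseteq> X" and SX: "S ` X \<subseteq> X"
    and Tcont: "gm_continuous X d T"
    and Tinj: "inj_on T X"
    and Tsub: "subseq_convergent_map X d T"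
    and lam_rng: "0 \<le> lam" "lam < 1/2"
    and contr: "\<forall>x\<in>X. \<forall>y\<in>X. d (T (S x)) (T (S y)) \<le> lam * (d (T x) (T (S x)) + d (T y) (T (S y)))"
  shows "(\<exists>!p. p \<in> X \<and> S p = p) \<and>
         (seq_convergent_map X d T \<longrightarrow>
            (\<forall>x0\<in>X. gm_converges X d (\<lambda>n. (S ^^ n) x0) (THE p. p \<in> X \<and> S p = p)))"
proof -
  note C = core[OF gms compl TX SX Tcont Tinj lam_rng contr]
  from gms have pos: "\<forall>x\<in>X. \<forall>y\<in>X. d x y \<ge> 0 \<and> (d x y = 0 \<longleftrightarrow> x = y)" and ne: "X \<noteq> {}"
    unfolding gen_metric_space_def by auto
  have itX: "(S^^n) x0 \<in> X" if "x0 \<in> X" for n x0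
    by (induction n) (use that SX in auto)
  have uniq: "p = q" if "p \<in> X" "S p = p" "q \<in> X" "S q = q" for p q
  proof -
    have "d (T (S p)) (T (S q)) \<le> lam * (d (T p) (T (S p)) + d (T q) (T (S q)))"
      using contr that by blast
    moreover have "T p \<in> X" "T q \<in> X" using TX that by auto
    moreover have "d (T p) (T p) = 0" "d (T q) (T q) = 0" using pos \<open>T p \<in> X\<close> \<open>T q \<in> X\<close> by auto
    ultimately have "d (T p) (T q) \<le> 0" using that by simp
    then have "T p = T q" using pos that TX proof -
      have "d (T p) (T q) \<ge> 0" using pos \<open>T p \<in> X\<close> \<open>T q \<in> X\<close> by blast
      then have "d (T p) (T q) = 0" using \<open>d (T p) (T q) \<le> 0\<close> by linarith
      then show ?thesis using pos \<open>T p \<in> X\<close> \<open>T q \<in> X\<close> by blast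
    qed
    then show ?thesis using inj_onD[OF Tinj] that by blast
  qed
  obtain x0 where x0: "x0 \<in> X" using ne by blast
  have exi: "\<exists>p. p \<in> X \<and> S p = p"
  proof -
    from C[OF x0] have tc: "gm_convergent X d (\<lambda>n. T ((S^^n) x0))" and
      cs: "(\<exists>N. S ((S^^N) x0) = (S^^N) x0) \<or>
      (\<forall>v r. strict_mono r \<and> gm_converges X d (\<lambda>n. (S^^(r n)) x0) v \<longrightarrow> S v = v)" by auto
    from cs show ?thesis
    proof
      assume "\<exists>N. S ((S^^N) x0) = (S^^N) x0"
      then show ?thesis using itX x0 by blast
    next
      assume H: "\<forall>v r. strict_mono r \<and> gm_converges X d (\<lambda>n. (S^^(r n)) x0) v \<longrightarrow> S v = v"
      have "range (\<lambda>n. (S^^n) x0) \<subseteq> X" using itX x0 by auto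
      then obtain r where r: "strict_mono r" "gm_convergent X d ((\<lambda>n. (S^^n) x0) \<circ> r)"
        using Tsub tc unfolding subseq_convergent_map_def by blast
      then obtain v where v: "gm_converges X d (\<lambda>n. (S^^(r n)) x0) v"
        unfolding gm_convergent_def by (auto simp: o_def)
      then have "v \<in> X" by (simp add: gm_converges_def)
      then show ?thesis using H r v by blast
    qed
  qed
  have ex1: "\<exists>!p. p \<in> X \<and> S p = p" using exi uniq by blast
  define P where "P = (THE p. p \<in> X \<and> S p = p)"
  have P: "P \<in> X" "S P = P" using theI'[OF ex1] unfolding P_def by auto
  have conv: "gm_converges X d (\<lambda>n. (S ^^ n) x0) P"
    if sc: "seq_convergent_map X d T" and x0: "x0 \<in> X" for x0
  proof -
    from C[OF x0] have tc: "gm_convergent X d (\<lambda>n. T ((S^^n) x0))" and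
      cs: "(\<exists>N. S ((S^^N) x0) = (S^^N) x0) \<or>
      (\<forall>v r. strict_mono r \<and> gm_converges X d (\<lambda>n. (S^^(r n)) x0) v \<longrightarrow> S v = v)" by auto
    from cs show ?thesis
    proof
      assume "\<exists>N. S ((S^^N) x0) = (S^^N) x0"
      then obtain N where N: "S ((S^^N) x0) = (S^^N) x0" by blast
      then have eqP: "(S^^N) x0 = P" using uniq itX x0 P by blast
      have "(S^^(N+k)) x0 = P" for k
        by (induction k) (use eqP P in auto)
      then have "\<forall>n\<ge>N. (S^^n) x0 = P" by (metis le_add_diff_inverse)
      then have "\<forall>\<^sub>F n in sequentially. d ((S^^n) x0) P = 0"
        unfolding eventually_sequentially using pos P by (intro exI[of _ N]) auto
      then show ?thesis using P by (simp add: gm_converges_def tendsto_eventually)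
    next
      assume H: "\<forall>v r. strict_mono r \<and> gm_converges X d (\<lambda>n. (S^^(r n)) x0) v \<longrightarrow> S v = v"
      have "range (\<lambda>n. (S^^n) x0) \<subseteq> X" using itX x0 by auto
      then obtain w where w: "gm_converges X d (\<lambda>n. (S^^n) x0) w"
        using sc tc unfolding seq_convergent_map_def gm_convergent_def by blast
      have "strict_mono (id::nat\<Rightarrow>nat)" by (simp add: strict_mono_def)
      then have "S w = w" using H[rule_format, of id w] w by simp
      moreover have "w \<in> X" using w by (simp add: gm_converges_def)
      ultimately have "w = P" using uniq P by blast
      then show ?thesis using w by simp
    qed
  qed
  show ?thesis using ex1 conv unfolding P_def by blast
qed

end
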